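(* Every rectangle whose side lengths are positive integers can be domed.
   Context: All equilateral triangles have unit edge length. A polyiamond is a polygon that is a union of unit equilateral triangles (glued edge to edge). For a convex polygon $P$, $P$ can be (deltahedrally) domed if there is a convex polyhedron that has $P$ as one face and all of whose other faces are convex polyiamonds; the union of these other faces is the dome, and $P$ is its base. *)

theory Defs
  imports "HOL-Analysis.Analysis"
begin

text \<open>Unit triangles of the triangular lattice spanned (from origin o) by unit
  vectors u, v enclosing an angle of 60 degrees: the "up" and "down" triangles
  with lattice coordinates (i, j).\<close>
definition lattice_triangle :: "real^3 \<Rightarrow> real^3 \<Rightarrow> real^3 \<Rightarrow> int \<Rightarrow> int \<Rightarrow> bool \<Rightarrow> (real^3) set" where
  "lattice_triangle o' u v i j up =
     (let p = (\<lambda>a b::int. o' + of_int a *\<^sub>R u + of_int b *\<^sub>R v) in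
      if up then convex hull {p i j, p (i+1) j, p i (j+1)}
      else convex hull {p (i+1) j, p i (j+1), p (i+1) (j+1)})"

text \<open>A polyiamond: a union of (finitely many, at least one) unit equilateral
  triangles glued edge to edge, i.e. cells of a triangular lattice with unit edge
  length in some plane of space.\<close>
definition polyiamond :: "(real^3) set \<Rightarrow> bool" where
  "polyiamond F \<longleftrightarrow>
     (\<exists>o' u v T. norm u = 1 \<and> norm v = 1 \<and> inner u v = 1/2 \<and>
        finite T \<and> T \<noteq> {} \<and>
        F = (\<Union>(i, j, up)\<in>T. lattice_triangle o' u v i j up))"

definition convex_polyiamond :: "(real^3) set \<Rightarrow> bool" where
  "convex_polyiamond F \<longleftrightarrow> convex F \<and> polyiamond F"

text \<open>A convex polyhedron in 3-space: a 3-dimensional polytope. Its faces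
  (in the sense of polygonal faces) are its facets.\<close>
definition convex_polyhedron :: "(real^3) set \<Rightarrow> bool" where
  "convex_polyhedron K \<longleftrightarrow> polytope K \<and> aff_dim K = 3"

definition can_be_domed :: "(real^3) set \<Rightarrow> bool" where
  "can_be_domed P \<longleftrightarrow>
     (\<exists>K. convex_polyhedron K \<and> P facet_of K \<and>
          (\<forall>F. F facet_of K \<and> F \<noteq> P \<longrightarrow> convex_polyiamond F))"

definition rectangle :: "(real^3) set \<Rightarrow> real \<Rightarrow> real \<Rightarrow> bool" where
  "rectangle P m n \<longleftrightarrow>
     (\<exists>a u v. norm u = 1 \<and> norm v = 1 \<and> inner u v = 0 \<and>
        P = convex hull {a, a + m *\<^sub>R u, a + n *\<^sub>R v, a + m *\<^sub>R u + n *\<^sub>R v})"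

end

theory Submission
  imports Defs
begin


definition region :: "real^3 \<Rightarrow> real^3 \<Rightarrow> real^3 \<Rightarrow> real \<Rightarrow> real \<Rightarrow> (real^3) set" where
  "region o' u v M N = {o' + \<alpha> *\<^sub>R u + \<beta> *\<^sub>R v | \<alpha> \<beta>. 0 \<le> \<alpha> \<and> 0 \<le> \<beta> \<and> \<beta> \<le> N \<and> \<alpha> + \<beta> \<le> M}"

definition Tset :: "int \<Rightarrow> int \<Rightarrow> (int \<times> int \<times> bool) set" where
  "Tset M N = {(i,j,up). 0 \<le> i \<and> 0 \<le> j \<and> j+1 \<le> N \<and> (if up then i+j+1 \<le> M else i+j+2 \<le> M)}"

lemma Tset_finite: "finite (Tset M N)"
proof -
  have "Tset M N \<subseteq> {0..M} \<times> {0..N} \<times> UNIV"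
    by (auto simp: Tset_def split: if_splits)
  then show ?thesis by (rule finite_subset) auto
qed

lemma Tset_ne: "1 \<le> N \<Longrightarrow> N \<le> M \<Longrightarrow> (0,0,True) \<in> Tset M N"
  by (auto simp: Tset_def)

lemma up_comb:
  fixes o' u v :: "real^3" and i j a b :: real
  shows "o' + (i + a) *\<^sub>R u + (j + b) *\<^sub>R v =
    (1 - a - b) *\<^sub>R (o' + i *\<^sub>R u + j *\<^sub>R v) + a *\<^sub>R (o' + (i+1) *\<^sub>R u + j *\<^sub>R v)
     + b *\<^sub>R (o' + i *\<^sub>R u + (j+1) *\<^sub>R v)"
  by (simp add: algebra_simps)

lemma down_comb:
  fixes o' u v :: "real^3" and i j a b :: real
  shows "o' + (i + a) *\<^sub>R u + (j + b) *\<^sub>R v =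
    (1 - b) *\<^sub>R (o' + (i+1) *\<^sub>R u + j *\<^sub>R v) + (1 - a) *\<^sub>R (o' + i *\<^sub>R u + (j+1) *\<^sub>R v)
     + (a + b - 1) *\<^sub>R (o' + (i+1) *\<^sub>R u + (j+1) *\<^sub>R v)"
  by (simp add: algebra_simps)

lemma region_sub:
  assumes "1 \<le> N" "N \<le> M"
  shows "region o' u v (of_int M) (of_int N) \<subseteq> (\<Union>(i, j, up)\<in>Tset M N. lattice_triangle o' u v i j up)"
proof
  fix x assume "x \<in> region o' u v (of_int M) (of_int N)"
  then obtain \<alpha> \<beta> where x: "x = o' + \<alpha> *\<^sub>R u + \<beta> *\<^sub>R v" and c: "0 \<le> \<alpha>" "0 \<le> \<beta>" "\<beta> \<le> N" "\<alpha> + \<beta> \<le> M"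
    unfolding region_def by blast
  define j where "j = min \<lfloor>\<beta>\<rfloor> (N - 1)"
  have j0: "0 \<le> j" using c assms by (simp add: j_def)
  have fb: "of_int \<lfloor>\<beta>\<rfloor> \<le> \<beta>" "\<beta> < of_int \<lfloor>\<beta>\<rfloor> + 1" by linarith+
  have fb2: "\<not> \<lfloor>\<beta>\<rfloor> \<le> N - 1 \<Longrightarrow> of_int N \<le> \<beta>"
  proof -
    assume "\<not> \<lfloor>\<beta>\<rfloor> \<le> N - 1"
    then have "N \<le> \<lfloor>\<beta>\<rfloor>" by linarith
    then have "(of_int N::real) \<le> of_int \<lfloor>\<beta>\<rfloor>" by linarith
    then show ?thesis using fb by linarith
  qed
  have j1: "j \<le> \<beta>" and j2: "\<beta> \<le> j + 1"
    using fb fb2 c by (auto simp: j_def min_def)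
  have j3: "j \<le> N - 1" by (simp add: j_def)
  define i where "i = min \<lfloor>\<alpha>\<rfloor> (M - j - 1)"
  have i0: "0 \<le> i" using c assms j3 by (simp add: i_def)
  have fa: "of_int \<lfloor>\<alpha>\<rfloor> \<le> \<alpha>" "\<alpha> < of_int \<lfloor>\<alpha>\<rfloor> + 1" by linarith+
  have fa2: "\<not> \<lfloor>\<alpha>\<rfloor> \<le> M - j - 1 \<Longrightarrow> of_int (M - j) \<le> \<alpha>"
  proof -
    assume "\<not> \<lfloor>\<alpha>\<rfloor> \<le> M - j - 1"
    then have "M - j \<le> \<lfloor>\<alpha>\<rfloor>" by linarith
    then have "(of_int (M - j)::real) \<le> of_int \<lfloor>\<alpha>\<rfloor>" by linarith
    then show ?thesis using fa by linarith
  qed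
  have i1: "i \<le> \<alpha>" and i2: "\<alpha> \<le> i + 1"
    using fa fa2 c j1 by (auto simp: i_def min_def)
  have i3: "i \<le> M - j - 1" by (simp add: i_def)
  define a where "a = \<alpha> - i"
  define b where "b = \<beta> - j"
  have xe: "x = o' + (of_int i + a) *\<^sub>R u + (of_int j + b) *\<^sub>R v" using x by (simp add: a_def b_def)
  have ab: "0 \<le> a" "a \<le> 1" "0 \<le> b" "b \<le> 1" "a + b \<le> M - i - j"
    using i1 i2 j1 j2 c by (auto simp: a_def b_def)
  show "x \<in> (\<Union>(i, j, up)\<in>Tset M N. lattice_triangle o' u v i j up)"
  proof (cases "a + b \<le> 1")
    case True
    have "(i,j,True) \<in> Tset M N" using i0 j0 j3 i3 by (simp add: Tset_def)
    moreover have "x \<in> lattice_triangle o' u v i j True"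
      unfolding lattice_triangle_def Let_def convex_hull_3 xe
      apply simp
      apply (rule exI[of _ "1 - a - b"], rule exI[of _ a], rule exI[of _ b])
      using ab True by (simp add: up_comb[of o' i a u j b v])
    ultimately show ?thesis by blast
  next
    case False
    have "i \<le> M - j - 2" using ab False by linarith
    then have "(i,j,False) \<in> Tset M N" using i0 j0 j3 by (simp add: Tset_def)
    moreover have "x \<in> lattice_triangle o' u v i j False"
      unfolding lattice_triangle_def Let_def convex_hull_3 xe
      apply simp
      apply (rule exI[of _ "1 - b"], rule exI[of _ "1 - a"], rule exI[of _ "a + b - 1"])
      using ab False by (simp add: down_comb[of o' i a u j b v])
    ultimately show ?thesis by blast
  qed
qed

lemma region_sup: "(\<Union>(i, j, up)\<in>Tset M N. lattice_triangle o' u v i j up) \<subseteq> region o' u v (of_int M) (of_int N)"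
proof clarify
  fix x i j up assume T: "(i, j, up) \<in> Tset M N" and x: "x \<in> lattice_triangle o' u v i j up"
  show "x \<in> region o' u v (of_int M) (of_int N)"
  proof (cases up)
    case True
    then obtain c1 c2 c3 where c: "0 \<le> c1" "0 \<le> c2" "0 \<le> c3" "c1 + c2 + c3 = 1"
      and xe: "x = c1 *\<^sub>R (o' + of_int i *\<^sub>R u + of_int j *\<^sub>R v) + c2 *\<^sub>R (o' + of_int (i+1) *\<^sub>R u + of_int j *\<^sub>R v)
         + c3 *\<^sub>R (o' + of_int i *\<^sub>R u + of_int (j+1) *\<^sub>R v)"
    proof -
      have "x \<in> convex hull {o' + of_int i *\<^sub>R u + of_int j *\<^sub>R v, o' + of_int (i+1) *\<^sub>R u + of_int j *\<^sub>R v,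
         o' + of_int i *\<^sub>R u + of_int (j+1) *\<^sub>R v}"
        using x True by (simp add: lattice_triangle_def Let_def)
      then show ?thesis using that unfolding convex_hull_3 by blast
    qed
    have "x = o' + (of_int i + c2) *\<^sub>R u + (of_int j + c3) *\<^sub>R v"
    proof -
      have e: "c1 = 1 - c2 - c3" using c(4) by simp
      show ?thesis unfolding up_comb using xe unfolding e of_int_add of_int_1 .
    qed
    moreover have "0 \<le> of_int i + c2" "0 \<le> of_int j + c3" "of_int j + c3 \<le> of_int N"
       "of_int i + c2 + (of_int j + c3) \<le> of_int M"
      using T True c by (auto simp: Tset_def)
    ultimately show ?thesis unfolding region_def by blast
  next
    case False
    then obtain c1 c2 c3 where c: "0 \<le> c1" "0 \<le> c2" "0 \<le> c3" "c1 + c2 + c3 = 1"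
      and xe: "x = c1 *\<^sub>R (o' + of_int (i+1) *\<^sub>R u + of_int j *\<^sub>R v) + c2 *\<^sub>R (o' + of_int i *\<^sub>R u + of_int (j+1) *\<^sub>R v)
         + c3 *\<^sub>R (o' + of_int (i+1) *\<^sub>R u + of_int (j+1) *\<^sub>R v)"
    proof -
      have "x \<in> convex hull {o' + of_int (i+1) *\<^sub>R u + of_int j *\<^sub>R v, o' + of_int i *\<^sub>R u + of_int (j+1) *\<^sub>R v,
         o' + of_int (i+1) *\<^sub>R u + of_int (j+1) *\<^sub>R v}"
        using x False by (simp add: lattice_triangle_def Let_def)
      then show ?thesis using that unfolding convex_hull_3 by blast
    qed
    have "x = o' + (of_int i + (1 - c2)) *\<^sub>R u + (of_int j + (1 - c1)) *\<^sub>R v"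
    proof -
      have e: "(1 - c2) + (1 - c1) - 1 = c3" "1 - (1 - c1) = c1" "1 - (1 - c2) = c2" using c(4) by simp_all
      show ?thesis apply (rule trans[OF _ down_comb[symmetric]]) unfolding e using xe unfolding of_int_add of_int_1 .
    qed
    moreover have "0 \<le> of_int i + (1 - c2)" "0 \<le> of_int j + (1 - c1)" "of_int j + (1 - c1) \<le> of_int N"
       "of_int i + (1 - c2) + (of_int j + (1 - c1)) \<le> of_int M"
      using T False c by (auto simp: Tset_def)
    ultimately show ?thesis unfolding region_def by blast
  qed
qed

lemma region_polyiamond:
  assumes "norm u = 1" "norm v = 1" "inner u v = 1/2" "1 \<le> N" "N \<le> M"
  shows "polyiamond (region o' u v (of_int M) (of_int N))"
  unfolding polyiamond_def
  apply (rule exI[of _ o'], rule exI[of _ u], rule exI[of _ v], rule exI[of _ "Tset M N"])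
  using assms Tset_finite Tset_ne[of N M] region_sub[of N M o' u v] region_sup[of o' u v M N] by blast



definition Av :: "nat \<Rightarrow> real^3" where
  "Av i = (if i = 1 then vector [0,0,-1] else if i = 2 then vector [0,-1,1] else if i = 3 then vector [0,1,1]
           else if i = 4 then vector [-1,0,1] else vector [1,0,1])"

definition Bv :: "real \<Rightarrow> real \<Rightarrow> nat \<Rightarrow> real" where
  "Bv m n i = (if i = 3 then n else if i = 5 then m else 0)"

definition Hs :: "real \<Rightarrow> real \<Rightarrow> nat \<Rightarrow> (real^3) set" where
  "Hs m n i = {x. Av i \<bullet> x \<le> Bv m n i}"

definition Iset :: "nat set" where "Iset = {1,2,3,4,5}"

definition K0 :: "real \<Rightarrow> real \<Rightarrow> (real^3) set" where
  "K0 m n = \<Inter>(Hs m n ` Iset)"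

lemma inner3: "inner (vector [p,q,r] :: real^3) x = p * x$1 + q * x$2 + r * x$3"
  by (simp add: inner_vec_def sum_3)

lemma Av_inner:
  "Av 1 \<bullet> x = - x$3" "Av 2 \<bullet> x = x$3 - x$2" "Av 3 \<bullet> x = x$3 + x$2" "Av 4 \<bullet> x = x$3 - x$1" "Av 5 \<bullet> x = x$3 + x$1"
  by (simp_all add: Av_def inner3)

lemma Bv_simps: "Bv m n 1 = 0" "Bv m n 2 = 0" "Bv m n 3 = n" "Bv m n 4 = 0" "Bv m n 5 = m"
  by (simp_all add: Bv_def)

lemma K0_iff: "x \<in> K0 m n \<longleftrightarrow> 0 \<le> x$3 \<and> x$3 \<le> x$2 \<and> x$3 + x$2 \<le> n \<and> x$3 \<le> x$1 \<and> x$3 + x$1 \<le> m"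
  by (auto simp: K0_def Hs_def Iset_def Av_def Bv_def inner3)

definition wit :: "real \<Rightarrow> real \<Rightarrow> nat \<Rightarrow> real^3" where
  "wit m n i = (if i = 1 then vector [m/2, n/2, -1] else if i = 2 then vector [m/2, -1, 0]
     else if i = 3 then vector [m/2, n+1, 0] else if i = 4 then vector [-1, n/2, 0] else vector [m+1, n/2, 0])"

lemma wit_mem:
  assumes "0 < n" "n \<le> m" "i \<in> Iset" "j \<in> Iset"
  shows "wit m n i \<in> Hs m n j \<longleftrightarrow> i \<noteq> j"
  using assms unfolding Iset_def Hs_def
  by (auto simp: wit_def Av_def Bv_def inner3)

lemma Hs_inj: "0 < n \<Longrightarrow> n \<le> m \<Longrightarrow> inj_on (Hs m n) Iset"
  unfolding inj_on_def using wit_mem by metis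

lemma K0_interior: 
  assumes "0 < n" "n \<le> m"
  shows "interior (K0 m n) \<noteq> {}"
proof -
  define Op where "Op = \<Inter>((\<lambda>i. {x. Av i \<bullet> x < Bv m n i}) ` Iset)"
  have "open Op" unfolding Op_def Iset_def by (auto intro!: open_halfspace_lt)
  moreover have "Op \<subseteq> K0 m n" unfolding Op_def K0_def Hs_def by (auto simp: less_imp_le)
  moreover have "vector [m/2, n/2, n/8] \<in> Op" using assms
    unfolding Op_def Iset_def by (auto simp: Av_def Bv_def inner3)
  ultimately show ?thesis using interior_maximal by blast
qed

lemma K0_aff_dim: "0 < n \<Longrightarrow> n \<le> m \<Longrightarrow> aff_dim (K0 m n) = 3"
  using K0_interior aff_dim_nonempty_interior by fastforce

lemma K0_affine_hull: "0 < n \<Longrightarrow> n \<le> m \<Longrightarrow> affine hull (K0 m n) = UNIV"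
  using K0_interior affine_hull_nonempty_interior by blast

lemma K0_polytope:
  assumes "0 < n" "n \<le> m"
  shows "polytope (K0 m n)"
proof -
  have "polyhedron (K0 m n)" unfolding K0_def Hs_def Iset_def
    by (auto intro!: polyhedron_halfspace_le)
  moreover have "bounded (K0 m n)"
  proof -
    have "norm x \<le> m + n + m" if "x \<in> K0 m n" for x
    proof -
      have "norm x \<le> \<bar>x$1\<bar> + \<bar>x$2\<bar> + \<bar>x$3\<bar>" using norm_le_l1_cart[of x] by (simp add: sum_3)
      then show ?thesis using that by (auto simp: K0_iff)
    qed
    then show ?thesis unfolding bounded_iff by blast
  qed
  ultimately show ?thesis using polytope_eq_bounded_polyhedron by blast
qed

lemma K0_facets:
  assumes "0 < n" "n \<le> m"
  shows "C facet_of K0 m n \<longleftrightarrow> (\<exists>i\<in>Iset. C = K0 m n \<inter> {x. Av i \<bullet> x = Bv m n i})"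
proof -
  define a where "a h = Av (inv_into Iset (Hs m n) h)" for h
  define b where "b h = Bv m n (inv_into Iset (Hs m n) h)" for h
  have inj: "inj_on (Hs m n) Iset" using Hs_inj assms by blast
  have ab: "a (Hs m n i) = Av i" "b (Hs m n i) = Bv m n i" if "i \<in> Iset" for i
    using inv_into_f_f[OF inj that] by (simp_all add: a_def b_def)
  have fin: "finite (Hs m n ` Iset)" by (simp add: Iset_def)
  have seq: "K0 m n = affine hull (K0 m n) \<inter> \<Inter>(Hs m n ` Iset)"
    using K0_affine_hull[OF assms] by (simp add: K0_def)
  have Av0: "Av i \<noteq> 0" for i
  proof
    assume "Av i = 0"
    then have "(Av i)$3 = 0" by simp
    then show False by (simp add: Av_def split: if_splits)
  qed
  have faceq: "a h \<noteq> 0 \<and> h = {x. a h \<bullet> x \<le> b h}" if "h \<in> Hs m n ` Iset" for h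
    using that ab Av0 by (auto simp: Hs_def)
  have psub: "K0 m n \<subset> affine hull (K0 m n) \<inter> \<Inter>F'" if sub: "F' \<subset> Hs m n ` Iset" for F'
  proof -
    obtain i where i: "i \<in> Iset" "Hs m n i \<notin> F'" using sub by blast
    have "wit m n i \<in> \<Inter>F'"
    proof
      fix h assume "h \<in> F'"
      then obtain j where "j \<in> Iset" "h = Hs m n j" using sub by blast
      then show "wit m n i \<in> h" using wit_mem[OF assms i(1)] i \<open>h \<in> F'\<close> by auto
    qed
    moreover have "wit m n i \<notin> K0 m n" using wit_mem[OF assms i(1) i(1)] i(1) by (auto simp: K0_def)
    ultimately show ?thesis using sub K0_affine_hull[OF assms] by (auto simp: K0_def)
  qed
  have "C facet_of K0 m n \<longleftrightarrow> (\<exists>h. h \<in> Hs m n ` Iset \<and> C = K0 m n \<inter> {x. a h \<bullet> x = b h})"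
    by (rule facet_of_polyhedron_explicit[OF fin seq faceq psub])
  also have "\<dots> \<longleftrightarrow> (\<exists>i\<in>Iset. C = K0 m n \<inter> {x. Av i \<bullet> x = Bv m n i})"
    using ab by auto
  finally show ?thesis .
qed



lemma face_region:
  assumes "o'$1 + \<alpha> * u$1 + \<beta> * v$1 = x$1" "o'$2 + \<alpha> * u$2 + \<beta> * v$2 = x$2" "o'$3 + \<alpha> * u$3 + \<beta> * v$3 = x$3"
    "0 \<le> \<alpha>" "0 \<le> \<beta>" "\<beta> \<le> N" "\<alpha> + \<beta> \<le> M"
  shows "x \<in> region o' u v M N"
proof -
  have "x = o' + \<alpha> *\<^sub>R u + \<beta> *\<^sub>R v" using assms(1-3) by (simp add: vec_eq_iff forall_3)
  then show ?thesis using assms(4-) unfolding region_def by blast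
qed

lemma region_mem3:
  assumes "x \<in> region o' u v M N"
  obtains \<alpha> \<beta> where "x$1 = o'$1 + \<alpha> * u$1 + \<beta> * v$1" "x$2 = o'$2 + \<alpha> * u$2 + \<beta> * v$2" "x$3 = o'$3 + \<alpha> * u$3 + \<beta> * v$3"
    "0 \<le> \<alpha>" "0 \<le> \<beta>" "\<beta> \<le> N" "\<alpha> + \<beta> \<le> M"
  using assms unfolding region_def by auto

lemma face2: "K0 m n \<inter> {x. Av 2 \<bullet> x = Bv m n 2} = region (vector[0,0,0]) (vector[1,0,0]) (vector[1/2,1/2,1/2]) m n"
proof (intro equalityI subsetI)
  fix x assume "x \<in> K0 m n \<inter> {x. Av 2 \<bullet> x = Bv m n 2}"
  then show "x \<in> region (vector[0,0,0]) (vector[1,0,0]) (vector[1/2,1/2,1/2]) m n"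
    by (intro face_region[where \<alpha>="x$1 - x$3" and \<beta>="2 * x$3"]) (auto simp: K0_iff Av_def Bv_def inner3)
next
  fix x assume "x \<in> region (vector[0,0,0]) (vector[1,0,0]) (vector[1/2,1/2,1/2]) m n"
  then show "x \<in> K0 m n \<inter> {x. Av 2 \<bullet> x = Bv m n 2}"
    by (elim region_mem3) (auto simp: K0_iff Av_def Bv_def inner3)
qed

lemma face3: "K0 m n \<inter> {x. Av 3 \<bullet> x = Bv m n 3} = region (vector[0,n,0]) (vector[1,0,0]) (vector[1/2,-1/2,1/2]) m n"
proof (intro equalityI subsetI)
  fix x assume "x \<in> K0 m n \<inter> {x. Av 3 \<bullet> x = Bv m n 3}"
  then show "x \<in> region (vector[0,n,0]) (vector[1,0,0]) (vector[1/2,-1/2,1/2]) m n"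
    by (intro face_region[where \<alpha>="x$1 - x$3" and \<beta>="2 * x$3"]) (auto simp: K0_iff Av_def Bv_def inner3)
next
  fix x assume "x \<in> region (vector[0,n,0]) (vector[1,0,0]) (vector[1/2,-1/2,1/2]) m n"
  then show "x \<in> K0 m n \<inter> {x. Av 3 \<bullet> x = Bv m n 3}"
    by (elim region_mem3) (auto simp: K0_iff Av_def Bv_def inner3)
qed

lemma face4: "n \<le> m \<Longrightarrow> K0 m n \<inter> {x. Av 4 \<bullet> x = Bv m n 4} = region (vector[0,0,0]) (vector[0,1,0]) (vector[1/2,1/2,1/2]) n n"
proof (intro equalityI subsetI)
  fix x assume "x \<in> K0 m n \<inter> {x. Av 4 \<bullet> x = Bv m n 4}"
  then show "x \<in> region (vector[0,0,0]) (vector[0,1,0]) (vector[1/2,1/2,1/2]) n n"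
    by (intro face_region[where \<alpha>="x$2 - x$3" and \<beta>="2 * x$3"]) (auto simp: K0_iff Av_def Bv_def inner3)
next
  fix x assume "n \<le> m" "x \<in> region (vector[0,0,0]) (vector[0,1,0]) (vector[1/2,1/2,1/2]) n n"
  then show "x \<in> K0 m n \<inter> {x. Av 4 \<bullet> x = Bv m n 4}"
    by (elim region_mem3) (auto simp: K0_iff Av_def Bv_def inner3)
qed

lemma face5: "n \<le> m \<Longrightarrow> K0 m n \<inter> {x. Av 5 \<bullet> x = Bv m n 5} = region (vector[m,0,0]) (vector[0,1,0]) (vector[-1/2,1/2,1/2]) n n"
proof (intro equalityI subsetI)
  fix x assume "x \<in> K0 m n \<inter> {x. Av 5 \<bullet> x = Bv m n 5}"
  then show "x \<in> region (vector[m,0,0]) (vector[0,1,0]) (vector[-1/2,1/2,1/2]) n n"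
    by (intro face_region[where \<alpha>="x$2 - x$3" and \<beta>="2 * x$3"]) (auto simp: K0_iff Av_def Bv_def inner3)
next
  fix x assume "n \<le> m" "x \<in> region (vector[m,0,0]) (vector[0,1,0]) (vector[-1/2,1/2,1/2]) n n"
  then show "x \<in> K0 m n \<inter> {x. Av 5 \<bullet> x = Bv m n 5}"
    by (elim region_mem3) (auto simp: K0_iff Av_def Bv_def inner3)
qed

lemma face1:
  assumes "0 < n" "0 < m"
  shows "K0 m n \<inter> {x. Av 1 \<bullet> x = Bv m n 1} = convex hull {vector[0,0,0], vector[m,0,0], vector[0,n,0], vector[m,n,0]}"
proof (intro equalityI subsetI)
  let ?S = "{vector[0,0,0], vector[m,0,0], vector[0,n,0], vector[m,n,0]} :: (real^3) set"
  fix x assume x: "x \<in> K0 m n \<inter> {x. Av 1 \<bullet> x = Bv m n 1}"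
  then have c: "x$3 = 0" "0 \<le> x$1" "x$1 \<le> m" "0 \<le> x$2" "x$2 \<le> n" by (auto simp: K0_iff Av_def Bv_def inner3)
  define s where "s = x$1 / m"
  define t where "t = x$2 / n"
  have s: "0 \<le> s" "s \<le> 1" and t: "0 \<le> t" "t \<le> 1" using c assms by (auto simp: s_def t_def divide_simps)
  have "vector[x$1, 0, 0] \<in> closed_segment (vector[0,0,0]) (vector[m,0,0] :: real^3)"
    unfolding closed_segment_def using s assms
    by (auto intro!: exI[of _ s] simp: vec_eq_iff forall_3 s_def)
  also have "\<dots> \<subseteq> convex hull ?S" by (rule closed_segment_subset) (auto intro: hull_inc)
  finally have p: "vector[x$1, 0, 0] \<in> convex hull ?S" .
  have "vector[x$1, n, 0] \<in> closed_segment (vector[0,n,0]) (vector[m,n,0] :: real^3)"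
    unfolding closed_segment_def using s assms
    by (auto intro!: exI[of _ s] simp: vec_eq_iff forall_3 s_def field_simps)
  also have "\<dots> \<subseteq> convex hull ?S" by (rule closed_segment_subset) (auto intro: hull_inc)
  finally have q: "vector[x$1, n, 0] \<in> convex hull ?S" .
  have "x \<in> closed_segment (vector[x$1, 0, 0]) (vector[x$1, n, 0] :: real^3)"
    unfolding closed_segment_def using t c assms
    by (auto intro!: exI[of _ t] simp: vec_eq_iff forall_3 t_def field_simps)
  also have "\<dots> \<subseteq> convex hull ?S" by (rule closed_segment_subset) (use p q in auto)
  finally show "x \<in> convex hull ?S" .
next
  let ?S = "{vector[0,0,0], vector[m,0,0], vector[0,n,0], vector[m,n,0]} :: (real^3) set"
  have "convex (K0 m n \<inter> {x. Av 1 \<bullet> x = Bv m n 1})"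
    unfolding K0_def Hs_def by (intro convex_Int convex_INT) (auto intro: convex_halfspace_le convex_hyperplane)
  moreover have "?S \<subseteq> K0 m n \<inter> {x. Av 1 \<bullet> x = Bv m n 1}"
    using assms by (auto simp: K0_iff Av_def Bv_def inner3)
  ultimately have "convex hull ?S \<subseteq> K0 m n \<inter> {x. Av 1 \<bullet> x = Bv m n 1}"
    by (meson hull_minimal)
  then show "\<And>x. x \<in> convex hull ?S \<Longrightarrow> x \<in> K0 m n \<inter> {x. Av 1 \<bullet> x = Bv m n 1}" by blast
qed



definition Lmap :: "real^3 \<Rightarrow> real^3 \<Rightarrow> real^3 \<Rightarrow> real^3 \<Rightarrow> real^3" where
  "Lmap u v w y = y$1 *\<^sub>R u + y$2 *\<^sub>R v + (sqrt 2 * y$3) *\<^sub>R w"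

lemma Lmap_linear: "linear (Lmap u v w)"
  unfolding Lmap_def by (rule linearI) (simp_all add: algebra_simps)

lemma Lmap_vec: "Lmap u v w (vector [p,q,r]) = p *\<^sub>R u + q *\<^sub>R v + (sqrt 2 * r) *\<^sub>R w"
  by (simp add: Lmap_def)

lemma Lmap_inner:
  assumes "norm u = 1" "norm v = 1" "norm w = 1" "u \<bullet> v = 0" "u \<bullet> w = 0" "v \<bullet> w = 0"
  shows "Lmap u v w x \<bullet> Lmap u v w y = x$1 * y$1 + x$2 * y$2 + 2 * (x$3 * y$3)"
proof -
  have n: "u \<bullet> u = 1" "v \<bullet> v = 1" "w \<bullet> w = 1" using assms(1-3) by (simp_all add: dot_square_norm)
  have c: "v \<bullet> u = 0" "w \<bullet> u = 0" "w \<bullet> v = 0" using assms(4-6) by (simp_all add: inner_commute)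
  have s: "sqrt 2 * sqrt 2 = (2::real)" by simp
  show ?thesis unfolding Lmap_def
    by (simp add: inner_add_left inner_add_right n c assms(4-6) algebra_simps)
qed

lemma Lmap_inj:
  assumes "norm u = 1" "norm v = 1" "norm w = 1" "u \<bullet> v = 0" "u \<bullet> w = 0" "v \<bullet> w = 0"
  shows "inj (Lmap u v w)"
proof (rule injI)
  fix x y assume e: "Lmap u v w x = Lmap u v w y"
  have "Lmap u v w x \<bullet> Lmap u v w (vector[1,0,0]) = Lmap u v w y \<bullet> Lmap u v w (vector[1,0,0])"
       "Lmap u v w x \<bullet> Lmap u v w (vector[0,1,0]) = Lmap u v w y \<bullet> Lmap u v w (vector[0,1,0])"
       "Lmap u v w x \<bullet> Lmap u v w (vector[0,0,1]) = Lmap u v w y \<bullet> Lmap u v w (vector[0,0,1])"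
    using e by simp_all
  then show "x = y" unfolding Lmap_inner[OF assms] by (simp add: vec_eq_iff forall_3)
qed

lemma facet_transfer:
  fixes f :: "real^3 \<Rightarrow> real^3"
  assumes "linear f" "inj f"
  shows "((+) a ` f ` c facet_of (+) a ` f ` S) \<longleftrightarrow> c facet_of S"
  unfolding facet_of_def using assms
  by (simp add: face_of_linear_image aff_dim_translation_eq)

lemma region_image:
  fixes f :: "real^3 \<Rightarrow> real^3"
  assumes "linear f"
  shows "(+) a ` f ` region o' u v M N = region (a + f o') (f u) (f v) M N"
proof -
  have "a + f (o' + \<alpha> *\<^sub>R u + \<beta> *\<^sub>R v) = (a + f o') + \<alpha> *\<^sub>R f u + \<beta> *\<^sub>R f v" for \<alpha> \<beta>
    using assms by (simp add: linear_add linear_scale add.assoc)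
  note e = this
  show ?thesis unfolding region_def image_image
  proof (intro equalityI subsetI)
    fix x assume "x \<in> (\<lambda>x. a + f x) ` {o' + \<alpha> *\<^sub>R u + \<beta> *\<^sub>R v |\<alpha> \<beta>. 0 \<le> \<alpha> \<and> 0 \<le> \<beta> \<and> \<beta> \<le> N \<and> \<alpha> + \<beta> \<le> M}"
    then obtain \<alpha> \<beta> where "x = a + f (o' + \<alpha> *\<^sub>R u + \<beta> *\<^sub>R v)" "0 \<le> \<alpha> \<and> 0 \<le> \<beta> \<and> \<beta> \<le> N \<and> \<alpha> + \<beta> \<le> M"
      by blast
    then show "x \<in> {a + f o' + \<alpha> *\<^sub>R f u + \<beta> *\<^sub>R f v |\<alpha> \<beta>. 0 \<le> \<alpha> \<and> 0 \<le> \<beta> \<and> \<beta> \<le> N \<and> \<alpha> + \<beta> \<le> M}"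
      unfolding e by blast
  next
    fix x assume "x \<in> {a + f o' + \<alpha> *\<^sub>R f u + \<beta> *\<^sub>R f v |\<alpha> \<beta>. 0 \<le> \<alpha> \<and> 0 \<le> \<beta> \<and> \<beta> \<le> N \<and> \<alpha> + \<beta> \<le> M}"
    then obtain \<alpha> \<beta> where "x = a + f (o' + \<alpha> *\<^sub>R u + \<beta> *\<^sub>R v)" "0 \<le> \<alpha> \<and> 0 \<le> \<beta> \<and> \<beta> \<le> N \<and> \<alpha> + \<beta> \<le> M"
      unfolding e[symmetric] by blast
    then show "x \<in> (\<lambda>x. a + f x) ` {o' + \<alpha> *\<^sub>R u + \<beta> *\<^sub>R v |\<alpha> \<beta>. 0 \<le> \<alpha> \<and> 0 \<le> \<beta> \<and> \<beta> \<le> N \<and> \<alpha> + \<beta> \<le> M}"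
      by blast
  qed
qed



lemma poly_L:
  fixes N M :: nat
  assumes "Lmap u v w p \<bullet> Lmap u v w p = 1" "Lmap u v w q \<bullet> Lmap u v w q = 1"
    "Lmap u v w p \<bullet> Lmap u v w q = 1/2" "1 \<le> N" "N \<le> M"
  shows "polyiamond (region o' (Lmap u v w p) (Lmap u v w q) (real M) (real N))"
  using region_polyiamond[of "Lmap u v w p" "Lmap u v w q" "int N" "int M" o'] assms
  by (simp add: norm_eq_sqrt_inner)

lemma main:
  fixes m n :: nat and a u v :: "real^3"
  assumes "1 \<le> n" "n \<le> m" "norm u = 1" "norm v = 1" "u \<bullet> v = 0"
   and P: "P = convex hull {a, a + real m *\<^sub>R u, a + real n *\<^sub>R v, a + real m *\<^sub>R u + real n *\<^sub>R v}"
  shows "can_be_domed P"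
proof -
  define w where "w = cross3 u v"
  have w: "norm w = 1" "u \<bullet> w = 0" "v \<bullet> w = 0"
  proof -
    have "(norm w)\<^sup>2 = 1" using norm_cross[of u v] assms by (simp add: w_def)
    then show "norm w = 1" by (smt (verit) norm_ge_zero power2_eq_1_iff)
    show "u \<bullet> w = 0" unfolding w_def by (rule dot_cross_self(1))
    show "v \<bullet> w = 0" unfolding w_def using dot_cross_self(3)[of u v] by (simp add: inner_commute)
  qed
  note orth = assms(3,4) w(1) assms(5) w(2,3)
  define L where "L = Lmap u v w"
  have lin: "linear L" unfolding L_def by (rule Lmap_linear)
  have inj: "inj L" unfolding L_def by (rule Lmap_inj[OF orth])
  have Li: "L x \<bullet> L y = x$1 * y$1 + x$2 * y$2 + 2 * (x$3 * y$3)" for x y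
    unfolding L_def by (rule Lmap_inner[OF orth])
  have pos: "0 < real n" "real n \<le> real m" using assms by auto
  define K where "K = (+) a ` L ` K0 (real m) (real n)"
  have conv: "convex_polyhedron K"
    unfolding convex_polyhedron_def K_def
    using polytope_linear_image[OF lin K0_polytope[OF pos]] K0_aff_dim[OF pos] lin inj
    by (simp add: polytope_translation_eq aff_dim_translation_eq)
  have Pe: "P = (+) a ` L ` (K0 (real m) (real n) \<inter> {x. Av 1 \<bullet> x = Bv (real m) (real n) 1})"
  proof -
    have "(+) a ` L ` (K0 (real m) (real n) \<inter> {x. Av 1 \<bullet> x = Bv (real m) (real n) 1})
      = (+) a ` L ` (convex hull {vector[0,0,0], vector[real m,0,0], vector[0,real n,0], vector[real m,real n,0]})"
      using face1[OF pos(1)] pos by simp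
    also have "\<dots> = convex hull ((+) a ` L ` {vector[0,0,0], vector[real m,0,0], vector[0,real n,0], vector[real m,real n,0]})"
      by (simp only: convex_hull_linear_image[OF lin] convex_hull_translation[symmetric])
    also have "\<dots> = P" unfolding P by (simp add: L_def Lmap_vec add.assoc)
    finally show ?thesis by simp
  qed
  have Pf: "P facet_of K"
    unfolding Pe K_def facet_transfer[OF lin inj] K0_facets[OF pos] Iset_def by auto
  have others: "convex_polyiamond F" if F: "F facet_of K" "F \<noteq> P" for F
  proof -
    have "convex F" using F(1) facet_of_imp_face_of face_of_imp_convex by blast
    define C where "C = {x \<in> K0 (real m) (real n). a + L x \<in> F}"
    have FC: "F = (+) a ` L ` C"
      using facet_of_imp_subset[OF F(1)] unfolding K_def C_def by auto
    have "C facet_of K0 (real m) (real n)"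
      using F(1) unfolding FC K_def facet_transfer[OF lin inj] .
    then obtain i where i: "i \<in> Iset" and Ci: "C = K0 (real m) (real n) \<inter> {x. Av i \<bullet> x = Bv (real m) (real n) i}"
      unfolding K0_facets[OF pos] by blast
    have "polyiamond F"
    proof -
      consider "i = 1" | "i = 2" | "i = 3" | "i = 4" | "i = 5" using i by (auto simp: Iset_def)
      then show ?thesis
      proof cases
        case 1 then show ?thesis using F(2) Pe FC Ci by simp
      next
        case 2
        have "F = region (a + L (vector[0,0,0])) (L (vector[1,0,0])) (L (vector[1/2,1/2,1/2])) (real m) (real n)"
          unfolding FC Ci 2 face2 region_image[OF lin] ..
        then show ?thesis using poly_L[of u v w "vector[1,0,0]" "vector[1/2,1/2,1/2]" n m] assms
          by (simp add: Li[unfolded L_def] L_def)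
      next
        case 3
        have "F = region (a + L (vector[0,real n,0])) (L (vector[1,0,0])) (L (vector[1/2,-1/2,1/2])) (real m) (real n)"
          unfolding FC Ci 3 face3 region_image[OF lin] ..
        then show ?thesis using poly_L[of u v w "vector[1,0,0]" "vector[1/2,-1/2,1/2]" n m] assms
          by (simp add: Li[unfolded L_def] L_def)
      next
        case 4
        have "F = region (a + L (vector[0,0,0])) (L (vector[0,1,0])) (L (vector[1/2,1/2,1/2])) (real n) (real n)"
          unfolding FC Ci 4 face4[OF pos(2)] region_image[OF lin] ..
        then show ?thesis using poly_L[of u v w "vector[0,1,0]" "vector[1/2,1/2,1/2]" n n] assms
          by (simp add: Li[unfolded L_def] L_def)
      next
        case 5
        have "F = region (a + L (vector[real m,0,0])) (L (vector[0,1,0])) (L (vector[-1/2,1/2,1/2])) (real n) (real n)"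
          unfolding FC Ci 5 face5[OF pos(2)] region_image[OF lin] ..
        then show ?thesis using poly_L[of u v w "vector[0,1,0]" "vector[-1/2,1/2,1/2]" n n] assms
          by (simp add: Li[unfolded L_def] L_def)
      qed
    qed
    with \<open>convex F\<close> show ?thesis unfolding convex_polyiamond_def by blast
  qed
  show ?thesis unfolding can_be_domed_def using conv Pf others by blast
qed

theorem lemma1:
  fixes P :: "(real^3) set" and m n :: nat
  assumes "m > 0" and "n > 0" and "rectangle P (real m) (real n)"
  shows "can_be_domed P"
proof -
  obtain a u v where r: "norm u = 1" "norm v = 1" "inner u v = 0"
    "P = convex hull {a, a + real m *\<^sub>R u, a + real n *\<^sub>R v, a + real m *\<^sub>R u + real n *\<^sub>R v}"
    using assms(3) unfolding rectangle_def by blast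
  show ?thesis
  proof (cases "n \<le> m")
    case True
    then show ?thesis using main[of n m u v P a] r assms by simp
  next
    case False
    have "P = convex hull {a, a + real n *\<^sub>R v, a + real m *\<^sub>R u, a + real n *\<^sub>R v + real m *\<^sub>R u}"
      using r(4) by (simp add: insert_commute add_ac)
    then show ?thesis using main[of m n v u P a] r assms False by (simp add: inner_commute)
  qed
qed


end
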